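(* Let $E$ be a finite set and $\mathcal{A}$ a set-arrangement on $E$. For each $A\in\mathcal{A}$ let $R_A\subseteq[\mathcal{F}(A),\mathcal{F}(A)]$ and $L_A=\mathcal{F}(A)/\langle R_A\rangle$. Let $\mathcal{L}=\mathcal{F}(E)/\langle R\rangle$, where $$R=\bigcup_{A\in\mathcal{A}}R_A\ \cup\ \{[x,y]:\ x,y\in E,\ \{x,y\}\not\subseteq A \text{ for every } A\in\mathcal{A}\}.$$ For $A\in\mathcal{A}$ let $\pi_A:\mathcal{L}\to L_A$ be the Lie homomorphism sending each $x\in E\setminus A$ to $0$ and each $x\in A$ to itself, and let $s_A:L_A\to\mathcal{L}$ be the Lie homomorphism induced by the inclusion $A\subseteq E$ (so $\pi_A\circ s_A=\mathrm{id}_{L_A}$). Let $\pi_A'$ and $s_A'$ denote the restrictions to the derived algebras $\mathcal{L}'=[\mathcal{L},\mathcal{L}]$ and $L_A'=[L_A,L_A]$, and let $I$ be the kernel of the surjective Lie homomorphism $\pi=\bigoplus_{A\in\mathcal{A}}\pi_A':\mathcal{L}'\to\bigoplus_{A\in\mathcal{A}}L_A'$. Then $I=0$ if and only if $[x,s_A'(L_A')]=0$ in $\mathcal{L}$ for all $A\in\mathcal{A}$ and all $x\in E\setminus A$.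
   Context: All Lie algebras are over a fixed field. $\mathcal{F}(X)$ denotes the free Lie algebra on a set $X$, and $\langle S\rangle$ the ideal generated by $S$. A set-arrangement on a finite set $E$ is a set $\mathcal{A}$ of subsets of $E$ such that $|A|\ge 3$ for all $A\in\mathcal{A}$ and $|A\cap B|\le 1$ for all distinct $A,B\in\mathcal{A}$. In the claim, elements $x\in E$ are identified with their images in $\mathcal{L}$. *)

theory Defs
  imports Main "HOL-Library.Function_Algebras"
begin

text \<open>Free associative algebra (noncommutative formal series) over a field 'k in
  letters of type 'e: functions from words to coefficients.\<close>

definition fmul :: "('e list \<Rightarrow> 'k::field) \<Rightarrow> ('e list \<Rightarrow> 'k) \<Rightarrow> ('e list \<Rightarrow> 'k)" where
  "fmul p q = (\<lambda>w. \<Sum>i\<le>length w. p (take i w) * q (drop i w))"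

definition lie_br :: "('e list \<Rightarrow> 'k::field) \<Rightarrow> ('e list \<Rightarrow> 'k) \<Rightarrow> ('e list \<Rightarrow> 'k)" where
  "lie_br p q = fmul p q - fmul q p"

definition gen :: "'e \<Rightarrow> ('e list \<Rightarrow> 'k::field)" where
  "gen x = (\<lambda>w. if w = [x] then 1 else 0)"

text \<open>The free Lie algebra F(X): the Lie subalgebra of the free associative algebra
  generated by the letters in X (over a field this is the free Lie algebra on X).\<close>

inductive_set free_lie :: "'e set \<Rightarrow> ('e list \<Rightarrow> 'k::field) set" for X :: "'e set" where
  fl_gen: "x \<in> X \<Longrightarrow> gen x \<in> free_lie X"
| fl_zero: "0 \<in> free_lie X"
| fl_add: "p \<in> free_lie X \<Longrightarrow> q \<in> free_lie X \<Longrightarrow> p + q \<in> free_lie X"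
| fl_smult: "p \<in> free_lie X \<Longrightarrow> (\<lambda>w. c * p w) \<in> free_lie X"
| fl_br: "p \<in> free_lie X \<Longrightarrow> q \<in> free_lie X \<Longrightarrow> lie_br p q \<in> free_lie X"

inductive_set derived_free :: "'e set \<Rightarrow> ('e list \<Rightarrow> 'k::field) set" for X :: "'e set" where
  df_br: "p \<in> free_lie X \<Longrightarrow> q \<in> free_lie X \<Longrightarrow> lie_br p q \<in> derived_free X"
| df_zero: "0 \<in> derived_free X"
| df_add: "p \<in> derived_free X \<Longrightarrow> q \<in> derived_free X \<Longrightarrow> p + q \<in> derived_free X"
| df_smult: "p \<in> derived_free X \<Longrightarrow> (\<lambda>w. c * p w) \<in> derived_free X"

inductive_set lie_ideal :: "'e set \<Rightarrow> ('e list \<Rightarrow> 'k::field) set \<Rightarrow> ('e list \<Rightarrow> 'k) set"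
  for X :: "'e set" and S :: "('e list \<Rightarrow> 'k) set" where
  li_gen: "s \<in> S \<Longrightarrow> s \<in> lie_ideal X S"
| li_zero: "0 \<in> lie_ideal X S"
| li_add: "p \<in> lie_ideal X S \<Longrightarrow> q \<in> lie_ideal X S \<Longrightarrow> p + q \<in> lie_ideal X S"
| li_smult: "p \<in> lie_ideal X S \<Longrightarrow> (\<lambda>w. c * p w) \<in> lie_ideal X S"
| li_br: "a \<in> free_lie X \<Longrightarrow> p \<in> lie_ideal X S \<Longrightarrow> lie_br a p \<in> lie_ideal X S"

text \<open>The homomorphism F(E) -> F(A) sending letters outside A to 0 and fixing letters in A.\<close>

definition proj :: "'e set \<Rightarrow> ('e list \<Rightarrow> 'k::field) \<Rightarrow> ('e list \<Rightarrow> 'k)" where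
  "proj A p = (\<lambda>w. if set w \<subseteq> A then p w else 0)"

definition set_arrangement :: "'e set \<Rightarrow> 'e set set \<Rightarrow> bool" where
  "set_arrangement E \<A> \<longleftrightarrow> (\<forall>A\<in>\<A>. A \<subseteq> E \<and> card A \<ge> 3) \<and>
     (\<forall>A\<in>\<A>. \<forall>B\<in>\<A>. A \<noteq> B \<longrightarrow> card (A \<inter> B) \<le> 1)"

definition rels :: "'e set \<Rightarrow> 'e set set \<Rightarrow> ('e set \<Rightarrow> ('e list \<Rightarrow> 'k::field) set) \<Rightarrow> ('e list \<Rightarrow> 'k) set" where
  "rels E \<A> RR = (\<Union>A\<in>\<A>. RR A) \<union>
     {lie_br (gen x) (gen y) | x y. x \<in> E \<and> y \<in> E \<and> (\<forall>A\<in>\<A>. \<not> {x, y} \<subseteq> A)}"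

end

theory Submission
  imports Defs
begin


lemma sum_fun_app: "(sum f S) x = sum (\<lambda>a. f a x) S"
  by (induction S rule: infinite_finite_induct) auto

lemma fmul_add_left: "fmul (p + q) r = fmul p r + fmul q r"
  by (rule ext) (simp add: fmul_def distrib_right sum.distrib)
lemma fmul_add_right: "fmul r (p + q) = fmul r p + fmul r q"
  by (rule ext) (simp add: fmul_def distrib_left sum.distrib)
lemma fmul_sm_left: "fmul (\<lambda>w. c * p w) q = (\<lambda>w. c * fmul p q w)"
  by (rule ext) (simp add: fmul_def sum_distrib_left mult.assoc)
lemma fmul_sm_right: "fmul q (\<lambda>w. c * p w) = (\<lambda>w. c * fmul q p w)"
  by (rule ext) (simp add: fmul_def sum_distrib_left ac_simps)
lemma fmul_zero_left: "fmul 0 q = 0"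
  by (rule ext) (simp add: fmul_def)
lemma fmul_zero_right: "fmul q 0 = 0"
  by (rule ext) (simp add: fmul_def)
lemma fmul_minus_left: "fmul (- p) q = - fmul p q"
  by (rule ext) (simp add: fmul_def sum_negf)
lemma fmul_minus_right: "fmul q (- p) = - fmul q p"
  by (rule ext) (simp add: fmul_def sum_negf)
lemma fmul_diff_left: "fmul (p - q) r = fmul p r - fmul q r"
  by (rule ext) (simp add: fmul_def left_diff_distrib sum_subtractf)
lemma fmul_diff_right: "fmul r (p - q) = fmul r p - fmul r q"
  by (rule ext) (simp add: fmul_def right_diff_distrib sum_subtractf)

lemma fmul_assoc: "fmul (fmul p q) r = fmul p (fmul q r)"
proof (rule ext)
  fix w :: "'a list"
  define n where "n = length w"
  define g where "g j k = p (take j w) * q (take k (drop j w)) * r (drop (j+k) w)" for j k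
  have "fmul (fmul p q) r w = (\<Sum>i\<le>n. \<Sum>j\<le>i. g j (i - j))"
    unfolding fmul_def n_def
    by (auto simp: g_def sum_distrib_right take_take drop_take min_def intro!: sum.cong)
  also have "\<dots> = (\<Sum>(j,k)\<in>{(j,k). j+k \<le> n}. g j k)"
    by (rule sum.triangle_reindex_eq[symmetric])
  also have "{(j,k). j+k \<le> n} = Sigma {..n} (\<lambda>j. {..n-j})" by auto
  also have "(\<Sum>(j,k)\<in>Sigma {..n} (\<lambda>j. {..n-j}). g j k) = (\<Sum>j\<le>n. \<Sum>k\<le>n-j. g j k)"
    by (rule sum.Sigma[symmetric]) auto
  also have "\<dots> = fmul p (fmul q r) w"
    unfolding fmul_def n_def
    by (auto simp: g_def sum_distrib_left drop_drop add.commute mult.assoc intro!: sum.cong)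
  finally show "fmul (fmul p q) r w = fmul p (fmul q r) w" .
qed

lemma br_add_left: "lie_br (p + q) r = lie_br p r + lie_br q r"
  by (simp add: lie_br_def fmul_add_left fmul_add_right)
lemma br_add_right: "lie_br r (p + q) = lie_br r p + lie_br r q"
  by (simp add: lie_br_def fmul_add_left fmul_add_right)
lemma br_sm_left: "lie_br (\<lambda>w. c * p w) q = (\<lambda>w. c * lie_br p q w)"
  by (rule ext) (simp add: lie_br_def fmul_sm_left fmul_sm_right right_diff_distrib)
lemma br_sm_right: "lie_br q (\<lambda>w. c * p w) = (\<lambda>w. c * lie_br q p w)"
  by (rule ext) (simp add: lie_br_def fmul_sm_left fmul_sm_right right_diff_distrib)
lemma br_zero_left: "lie_br 0 q = 0"
  by (simp add: lie_br_def fmul_zero_left fmul_zero_right)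
lemma br_zero_right: "lie_br q 0 = 0"
  by (simp add: lie_br_def fmul_zero_left fmul_zero_right)
lemma br_anti: "lie_br p q = - lie_br q p"
  by (simp add: lie_br_def)
lemma br_diff_right: "lie_br r (p - q) = lie_br r p - lie_br r q"
  by (simp add: lie_br_def fmul_diff_left fmul_diff_right)
lemma br_sum_right: "lie_br r (sum f S) = (\<Sum>a\<in>S. lie_br r (f a))"
proof (induction S rule: infinite_finite_induct)
  case (infinite A) then show ?case by (metis br_zero_right sum.infinite)
next
  case empty then show ?case by (metis br_zero_right sum.empty)
next
  case (insert x F) then show ?case by (metis br_add_right sum.insert)
qed
lemma jacobi: "lie_br (lie_br a b) q = lie_br a (lie_br b q) - lie_br b (lie_br a q)"
  by (simp add: lie_br_def fmul_diff_left fmul_diff_right fmul_assoc algebra_simps)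
lemma jacobi2: "lie_br y (lie_br a b) = lie_br a (lie_br y b) - lie_br b (lie_br y a)"
  by (simp add: lie_br_def fmul_diff_left fmul_diff_right fmul_assoc algebra_simps)



lemma proj_add: "proj A (p + q) = proj A p + proj A q"
  by (rule ext) (simp add: proj_def)
lemma proj_sm: "proj A (\<lambda>w. c * p w) = (\<lambda>w. c * proj A p w)"
  by (rule ext) (simp add: proj_def)
lemma proj_zero: "proj A 0 = 0"
  by (rule ext) (simp add: proj_def)
lemma proj_diff: "proj A (p - q) = proj A p - proj A q"
  by (rule ext) (simp add: proj_def)
lemma proj_sum: "proj A (sum f S) = (\<Sum>a\<in>S. proj A (f a))"
  by (rule ext) (simp add: proj_def sum_fun_app)

lemma set_split_sub: "set w \<subseteq> A \<longleftrightarrow> set (take i w) \<subseteq> A \<and> set (drop i w) \<subseteq> A"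
proof -
  have "set w = set (take i w) \<union> set (drop i w)"
    by (metis append_take_drop_id set_append)
  then show ?thesis by blast
qed

lemma proj_fmul: "proj A (fmul p q) = fmul (proj A p) (proj A q)"
proof (rule ext)
  fix w :: "'a list"
  show "proj A (fmul p q) w = fmul (proj A p) (proj A q) w"
  proof (cases "set w \<subseteq> A")
    case True
    have t: "set (take i w) \<subseteq> A" "set (drop i w) \<subseteq> A" for i
      using True set_split_sub[of w A i] by simp_all
    have "proj A (fmul p q) w = fmul p q w" using True by (simp add: proj_def)
    also have "\<dots> = fmul (proj A p) (proj A q) w"
      unfolding fmul_def proj_def using t by simp
    finally show ?thesis .
  next
    case False
    have t: "\<not> set (take i w) \<subseteq> A \<or> \<not> set (drop i w) \<subseteq> A" for i
      using False set_split_sub[of w A i] by simp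
    have z: "proj A p (take i w) * proj A q (drop i w) = 0" for i
      using t[of i] unfolding proj_def by auto
    have "proj A (fmul p q) w = 0" using False by (simp add: proj_def)
    also have "\<dots> = fmul (proj A p) (proj A q) w"
      unfolding fmul_def by (simp add: z)
    finally show ?thesis .
  qed
qed

lemma proj_br: "proj A (lie_br p q) = lie_br (proj A p) (proj A q)"
  by (simp add: lie_br_def proj_diff proj_fmul)

lemma proj_gen: "proj A (gen x) = (if x \<in> A then gen x else 0)"
  by (rule ext) (auto simp: proj_def gen_def)

lemma proj_proj: "proj B (proj A p) = proj (A \<inter> B) p"
  by (rule ext) (auto simp: proj_def)

lemma free_lie_supp: "p \<in> free_lie A \<Longrightarrow> proj A p = p"
proof (induction rule: free_lie.induct)
  case (fl_gen x) then show ?case by (simp add: proj_gen)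
next
  case fl_zero then show ?case by (rule proj_zero)
next
  case (fl_add p q) then show ?case by (metis proj_add)
next
  case (fl_smult p c) then show ?case by (metis proj_sm)
next
  case (fl_br p q) then show ?case by (metis proj_br)
qed

lemma free_lie_mono: "p \<in> free_lie A \<Longrightarrow> A \<subseteq> B \<Longrightarrow> p \<in> free_lie B"
proof (induction rule: free_lie.induct)
  case (fl_gen x) then show ?case by (meson free_lie.fl_gen subsetD)
next
  case fl_zero show ?case by (rule free_lie.fl_zero)
next
  case (fl_add p q) show ?case by (rule free_lie.fl_add[OF fl_add.IH[OF fl_add.prems]])
next
  case (fl_smult p c) show ?case by (rule free_lie.fl_smult[OF fl_smult.IH[OF fl_smult.prems]])
next
  case (fl_br p q) show ?case by (rule free_lie.fl_br[OF fl_br.IH[OF fl_br.prems]])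
qed

lemma derived_sub_free: "v \<in> derived_free A \<Longrightarrow> v \<in> free_lie A"
proof (induction rule: derived_free.induct)
  case (df_br p q) show ?case by (rule free_lie.fl_br[OF df_br.hyps])
next
  case df_zero show ?case by (rule free_lie.fl_zero)
next
  case (df_add p q) show ?case by (rule free_lie.fl_add[OF df_add.IH])
next
  case (df_smult p c) show ?case by (rule free_lie.fl_smult[OF df_smult.IH])
qed

lemma proj_free: "p \<in> free_lie E \<Longrightarrow> proj B p \<in> free_lie B"
proof (induction rule: free_lie.induct)
  case (fl_gen x) show ?case
  proof (cases "x \<in> B")
    case True then show ?thesis unfolding proj_gen by (simp add: free_lie.fl_gen)
  next
    case False show ?thesis unfolding proj_gen if_not_P[OF False] by (rule free_lie.fl_zero)
  qed
next
  case fl_zero show ?case unfolding proj_zero by (rule free_lie.fl_zero)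
next
  case (fl_add p q) show ?case unfolding proj_add by (rule free_lie.fl_add[OF fl_add.IH])
next
  case (fl_smult p c) show ?case unfolding proj_sm by (rule free_lie.fl_smult[OF fl_smult.IH])
next
  case (fl_br p q) show ?case unfolding proj_br by (rule free_lie.fl_br[OF fl_br.IH])
qed

lemma fmul_rep: "fmul P Q (replicate n z) = (\<Sum>i\<in>{0..n}. P (replicate i z) * Q (replicate (n - i) z))"
  unfolding fmul_def by (simp add: atLeast0AtMost)

lemma fmul_rep_comm: "fmul P Q (replicate n z) = fmul Q P (replicate n z)"
proof -
  have "fmul P Q (replicate n z) = (\<Sum>i\<in>{0..n}. P (replicate i z) * Q (replicate (n - i) z))"
    by (rule fmul_rep)
  also have "\<dots> = (\<Sum>i\<in>{0..n}. P (replicate (n + 0 - i) z) * Q (replicate (n - (n + 0 - i)) z))"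
    by (rule sum.atLeastAtMost_rev)
  also have "\<dots> = (\<Sum>i\<in>{0..n}. Q (replicate i z) * P (replicate (n - i) z))"
    by (rule sum.cong) (auto simp: mult.commute)
  also have "\<dots> = fmul Q P (replicate n z)"
    by (rule fmul_rep[symmetric])
  finally show ?thesis .
qed

lemma comm_small:
  assumes "finite C" "card C \<le> 1"
  shows "fmul (proj C p) (proj C q) = fmul (proj C q) (proj C p)"
proof (rule ext)
  fix w :: "'a list"
  show "fmul (proj C p) (proj C q) w = fmul (proj C q) (proj C p) w"
  proof (cases "set w \<subseteq> C")
    case True
    have all: "\<forall>a1\<in>C. \<forall>a2\<in>C. a1 = a2" using assms card_le_Suc0_iff_eq[of C] by simp
    have "\<forall>y\<in>set w. y = hd w"
    proof
      fix y assume y: "y \<in> set w"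
      then have "w \<noteq> []" by auto
      then have "hd w \<in> C" using True hd_in_set by blast
      moreover have "y \<in> C" using True y by blast
      ultimately show "y = hd w" using all by blast
    qed
    then have w: "replicate (length w) (hd w) = w" by (rule replicate_length_same)
    show ?thesis using fmul_rep_comm[of "proj C p" "proj C q" "length w" "hd w"] unfolding w .
  next
    case False
    have *: "\<not> set (take i w) \<subseteq> C \<or> \<not> set (drop i w) \<subseteq> C" for i
      using False set_split_sub[of w C i] by simp
    have z1: "proj C p (take i w) * proj C q (drop i w) = 0" for i
      using *[of i] unfolding proj_def by auto
    have z2: "proj C q (take i w) * proj C p (drop i w) = 0" for i
      using *[of i] unfolding proj_def by auto
    show ?thesis unfolding fmul_def by (simp add: z1 z2)
  qed
qed

lemma proj_derived_zero:
  assumes "v \<in> derived_free A" "finite (A \<inter> B)" "card (A \<inter> B) \<le> 1"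
  shows "proj B v = 0"
  using assms(1)
proof (induction rule: derived_free.induct)
  case (df_br p q)
  have 1: "proj B p = proj (A \<inter> B) p"
    by (subst free_lie_supp[OF df_br(1), symmetric]) (rule proj_proj)
  have 2: "proj B q = proj (A \<inter> B) q"
    by (subst free_lie_supp[OF df_br(2), symmetric]) (rule proj_proj)
  show ?case unfolding proj_br 1 2 unfolding lie_br_def comm_small[OF assms(2,3), of p q] by (rule diff_self)
next
  case df_zero show ?case by (rule proj_zero)
next
  case (df_add p q) show ?case unfolding proj_add df_add.IH by (rule add_0)
next
  case (df_smult p c) show ?case unfolding proj_sm df_smult.IH by (rule ext) simp
qed



lemma li_neg: "p \<in> lie_ideal X S \<Longrightarrow> - p \<in> lie_ideal X S"
proof -
  assume "p \<in> lie_ideal X S"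
  then have "(\<lambda>w. (-1) * p w) \<in> lie_ideal X S" by (rule li_smult)
  moreover have "(\<lambda>w. (-1) * p w) = - p" by (rule ext) simp
  ultimately show ?thesis by simp
qed

lemma li_diff: "p \<in> lie_ideal X S \<Longrightarrow> q \<in> lie_ideal X S \<Longrightarrow> p - q \<in> lie_ideal X S"
  unfolding diff_conv_add_uminus by (rule li_add) (simp_all add: li_neg)

lemma li_sum: "finite I \<Longrightarrow> (\<And>i. i \<in> I \<Longrightarrow> f i \<in> lie_ideal X S) \<Longrightarrow> sum f I \<in> lie_ideal X S"
proof (induction I rule: finite_induct)
  case empty show ?case unfolding sum.empty by (rule li_zero)
next
  case (insert x F)
  show ?case unfolding sum.insert[OF insert.hyps]
    by (rule li_add) (simp_all add: insert.prems insert.IH)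
qed

lemma li_mono: "p \<in> lie_ideal B S' \<Longrightarrow> B \<subseteq> X \<Longrightarrow> S' \<subseteq> S \<Longrightarrow> p \<in> lie_ideal X S"
proof (induction rule: lie_ideal.induct)
  case (li_gen s) then show ?case by (meson lie_ideal.li_gen subsetD)
next
  case li_zero show ?case by (rule lie_ideal.li_zero)
next
  case (li_add p q) show ?case by (rule lie_ideal.li_add[OF li_add.IH[OF li_add.prems]])
next
  case (li_smult p c) show ?case by (rule lie_ideal.li_smult[OF li_smult.IH[OF li_smult.prems]])
next
  case (li_br a p) show ?case
    by (rule lie_ideal.li_br[OF free_lie_mono[OF li_br.hyps(1) li_br.prems(1)] li_br.IH[OF li_br.prems]])
qed

definition inD :: "'e set \<Rightarrow> 'e set set \<Rightarrow> ('e set \<Rightarrow> ('e list \<Rightarrow> 'k::field) set) \<Rightarrow> ('e list \<Rightarrow> 'k) \<Rightarrow> bool" where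
  "inD E AA RR u \<longleftrightarrow> (\<exists>v. (\<forall>A\<in>AA. v A \<in> derived_free A) \<and> u - sum v AA \<in> lie_ideal E (rels E AA RR))"

lemma inD_J: "u \<in> lie_ideal E (rels E AA RR) \<Longrightarrow> inD E AA RR u"
  unfolding inD_def by (rule exI[of _ "\<lambda>A. 0"]) (simp add: derived_free.df_zero)

lemma inD_zero: "inD E AA RR 0"
  by (rule inD_J) (rule lie_ideal.li_zero)

lemma inD_df: "finite AA \<Longrightarrow> A \<in> AA \<Longrightarrow> u \<in> derived_free A \<Longrightarrow> inD E AA RR u"
  unfolding inD_def
proof (rule exI[of _ "\<lambda>B. if B = A then u else 0"], intro conjI ballI)
  fix B assume "finite AA" "A \<in> AA" "u \<in> derived_free A" "B \<in> AA"
  then show "(if B = A then u else 0) \<in> derived_free B" by (simp add: derived_free.df_zero)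
next
  assume "finite AA" "A \<in> AA" "u \<in> derived_free A"
  then have "sum (\<lambda>B. if B = A then u else 0) AA = u"
    using sum.delta'[of AA A "\<lambda>_. u"] by simp
  then show "u - sum (\<lambda>B. if B = A then u else 0) AA \<in> lie_ideal E (rels E AA RR)"
    by (simp add: lie_ideal.li_zero)
qed

lemma inD_add: "inD E AA RR u \<Longrightarrow> inD E AA RR u' \<Longrightarrow> inD E AA RR (u + u')"
proof -
  assume "inD E AA RR u" "inD E AA RR u'"
  then obtain v v' where v: "\<forall>A\<in>AA. v A \<in> derived_free A" "u - sum v AA \<in> lie_ideal E (rels E AA RR)"
    and v': "\<forall>A\<in>AA. v' A \<in> derived_free A" "u' - sum v' AA \<in> lie_ideal E (rels E AA RR)"
    unfolding inD_def by blast
  have e: "(u + u') - sum (\<lambda>A. v A + v' A) AA = (u - sum v AA) + (u' - sum v' AA)"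
    by (simp add: sum.distrib)
  show ?thesis unfolding inD_def
    apply (rule exI[of _ "\<lambda>A. v A + v' A"])
    apply (intro conjI ballI)
     apply (simp add: v v' derived_free.df_add)
    unfolding e by (rule li_add[OF v(2) v'(2)])
qed

lemma inD_sm: "inD E AA RR u \<Longrightarrow> inD E AA RR (\<lambda>w. c * u w)"
proof -
  assume "inD E AA RR u"
  then obtain v where v: "\<forall>A\<in>AA. v A \<in> derived_free A" "u - sum v AA \<in> lie_ideal E (rels E AA RR)"
    unfolding inD_def by blast
  have e: "(\<lambda>w. c * u w) - sum (\<lambda>A. (\<lambda>w. c * v A w)) AA = (\<lambda>w. c * (u - sum v AA) w)"
    by (rule ext) (simp add: sum_fun_app sum_distrib_left right_diff_distrib)
  show ?thesis unfolding inD_def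
    apply (rule exI[of _ "\<lambda>A. (\<lambda>w. c * v A w)"])
    apply (intro conjI ballI)
     apply (simp add: v derived_free.df_smult)
    unfolding e by (rule li_smult[OF v(2)])
qed

lemma inD_neg: "inD E AA RR u \<Longrightarrow> inD E AA RR (- u)"
proof -
  assume "inD E AA RR u"
  then have "inD E AA RR (\<lambda>w. (-1) * u w)" by (rule inD_sm)
  moreover have "(\<lambda>w. (-1) * u w) = - u" by (rule ext) simp
  ultimately show ?thesis by simp
qed

lemma inD_diff: "inD E AA RR u \<Longrightarrow> inD E AA RR u' \<Longrightarrow> inD E AA RR (u - u')"
  unfolding diff_conv_add_uminus by (rule inD_add) (simp_all add: inD_neg)

lemma inD_sum: "finite I \<Longrightarrow> (\<And>i. i \<in> I \<Longrightarrow> inD E AA RR (f i)) \<Longrightarrow> inD E AA RR (sum f I)"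
proof (induction I rule: finite_induct)
  case empty show ?case unfolding sum.empty by (rule inD_zero)
next
  case (insert x F)
  show ?case unfolding sum.insert[OF insert.hyps]
    by (rule inD_add) (simp_all add: insert.prems insert.IH)
qed



locale arrsetup =
  fixes E :: "'e set" and AA :: "'e set set" and RR :: "'e set \<Rightarrow> ('e list \<Rightarrow> 'k::field) set"
  assumes finE: "finite E"
    and arr: "set_arrangement E AA"
    and RRd: "\<forall>A\<in>AA. RR A \<subseteq> derived_free A"
begin

lemma AsubE: "A \<in> AA \<Longrightarrow> A \<subseteq> E"
  using arr unfolding set_arrangement_def by blast

lemma finAA: "finite AA"
proof -
  have "AA \<subseteq> Pow E" using AsubE by blast
  then show ?thesis using finE by (meson finite_Pow_iff finite_subset)
qed

lemma small: "A \<in> AA \<Longrightarrow> B \<in> AA \<Longrightarrow> A \<noteq> B \<Longrightarrow> finite (A \<inter> B) \<and> card (A \<inter> B) \<le> 1"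
  using arr AsubE finE unfolding set_arrangement_def by (meson finite_Int finite_subset)

lemma proj_J: "u \<in> lie_ideal E (rels E AA RR) \<Longrightarrow> B \<in> AA \<Longrightarrow> proj B u \<in> lie_ideal B (RR B)"
proof (induction rule: lie_ideal.induct)
  case (li_gen s)
  from li_gen(1) consider (r) A where "A \<in> AA" "s \<in> RR A"
    | (b) x y where "s = lie_br (gen x) (gen y)" "\<forall>A\<in>AA. \<not> {x, y} \<subseteq> A"
    unfolding rels_def by blast
  then show ?case
  proof cases
    case r
    have sd: "s \<in> derived_free A" using r RRd by blast
    show ?thesis
    proof (cases "A = B")
      case True
      have "proj B s = s" using free_lie_supp[OF derived_sub_free[OF sd]] True by simp
      then show ?thesis using r True by (simp add: lie_ideal.li_gen)
    next
      case False
      have z: "proj B s = 0" using proj_derived_zero[OF sd] small[OF r(1) li_gen(2) False] by blast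
      show ?thesis unfolding z by (rule lie_ideal.li_zero)
    qed
  next
    case b
    have "x \<notin> B \<or> y \<notin> B" using b(2) li_gen(2) by blast
    then have z: "proj B s = 0" unfolding b(1) proj_br proj_gen
      by (auto simp: br_zero_left br_zero_right)
    show ?thesis unfolding z by (rule lie_ideal.li_zero)
  qed
next
  case li_zero show ?case unfolding proj_zero by (rule lie_ideal.li_zero)
next
  case (li_add p q) show ?case unfolding proj_add by (rule lie_ideal.li_add[OF li_add.IH[OF li_add.prems]])
next
  case (li_smult p c) show ?case unfolding proj_sm by (rule lie_ideal.li_smult[OF li_smult.IH[OF li_smult.prems]])
next
  case (li_br a p) show ?case unfolding proj_br
    by (rule lie_ideal.li_br[OF proj_free[OF li_br.hyps(1)] li_br.IH[OF li_br.prems]])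
qed

end

locale arrhyp = arrsetup +
  assumes H: "\<forall>A\<in>AA. \<forall>x\<in>E - A. \<forall>v\<in>derived_free A. lie_br (gen x) v \<in> lie_ideal E (rels E AA RR)"
begin

lemma Dbr: "p \<in> free_lie E \<Longrightarrow> inD E AA RR q \<Longrightarrow> inD E AA RR (lie_br p q)"
proof (induction arbitrary: q rule: free_lie.induct)
  case (fl_gen x)
  from fl_gen.prems obtain v where v: "\<forall>A\<in>AA. v A \<in> derived_free A" "q - sum v AA \<in> lie_ideal E (rels E AA RR)"
    unfolding inD_def by blast
  have e: "lie_br (gen x) q = lie_br (gen x) (q - sum v AA) + (\<Sum>A\<in>AA. lie_br (gen x) (v A))"
    unfolding br_diff_right br_sum_right by simp
  show ?case unfolding e
  proof (rule inD_add)
    show "inD E AA RR (lie_br (gen x) (q - sum v AA))"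
      by (rule inD_J) (rule lie_ideal.li_br[OF free_lie.fl_gen[OF fl_gen.hyps] v(2)])
    show "inD E AA RR (\<Sum>A\<in>AA. lie_br (gen x) (v A))"
    proof (rule inD_sum[OF finAA])
      fix A assume A: "A \<in> AA"
      show "inD E AA RR (lie_br (gen x) (v A))"
      proof (cases "x \<in> A")
        case True
        have "lie_br (gen x) (v A) \<in> derived_free A"
          by (rule df_br[OF free_lie.fl_gen[OF True] derived_sub_free]) (simp add: v A)
        then show ?thesis by (rule inD_df[OF finAA A])
      next
        case False
        have "x \<in> E - A" using False fl_gen.hyps by blast
        then show ?thesis using H[rule_format, OF A _ v(1)[rule_format, OF A]] by (intro inD_J) blast
      qed
    qed
  qed
next
  case fl_zero show ?case unfolding br_zero_left by (rule inD_zero)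
next
  case (fl_add p p') show ?case unfolding br_add_left
    by (rule inD_add[OF fl_add.IH(1)[OF fl_add.prems] fl_add.IH(2)[OF fl_add.prems]])
next
  case (fl_smult p c) show ?case unfolding br_sm_left
    by (rule inD_sm[OF fl_smult.IH[OF fl_smult.prems]])
next
  case (fl_br a b) show ?case unfolding jacobi[of a b]
    by (rule inD_diff[OF fl_br.IH(1)[OF fl_br.IH(2)[OF fl_br.prems]] fl_br.IH(2)[OF fl_br.IH(1)[OF fl_br.prems]]])
qed

lemma genD: "p \<in> free_lie E \<Longrightarrow> y \<in> E \<Longrightarrow> inD E AA RR (lie_br (gen y) p)"
proof (induction rule: free_lie.induct)
  case (fl_gen x)
  show ?case
  proof (cases "\<exists>A\<in>AA. {y, x} \<subseteq> A")
    case True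
    then obtain A where A: "A \<in> AA" "y \<in> A" "x \<in> A" by blast
    show ?thesis
      by (rule inD_df[OF finAA A(1)]) (rule df_br[OF free_lie.fl_gen[OF A(2)] free_lie.fl_gen[OF A(3)]])
  next
    case False
    have nf: "\<forall>A\<in>AA. \<not> {y, x} \<subseteq> A" using False by simp
    have "lie_br (gen y) (gen x) \<in> {lie_br (gen x) (gen y) | x y. x \<in> E \<and> y \<in> E \<and> (\<forall>A\<in>AA. \<not> {x, y} \<subseteq> A)}"
      using fl_gen.hyps fl_gen.prems nf by blast
    then have rr: "lie_br (gen y) (gen x) \<in> rels E AA RR"
      unfolding rels_def by (rule UnI2)
    show ?thesis by (rule inD_J[OF lie_ideal.li_gen[OF rr]])
  qed
next
  case fl_zero show ?case unfolding br_zero_right by (rule inD_zero)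
next
  case (fl_add p p') show ?case unfolding br_add_right
    by (rule inD_add[OF fl_add.IH(1)[OF fl_add.prems] fl_add.IH(2)[OF fl_add.prems]])
next
  case (fl_smult p c) show ?case unfolding br_sm_right
    by (rule inD_sm[OF fl_smult.IH[OF fl_smult.prems]])
next
  case (fl_br a b) show ?case unfolding jacobi2[of "gen y" a b]
    by (rule inD_diff[OF Dbr[OF fl_br.hyps(1) fl_br.IH(2)[OF fl_br.prems]] Dbr[OF fl_br.hyps(2) fl_br.IH(1)[OF fl_br.prems]]])
qed

lemma pairD: "p \<in> free_lie E \<Longrightarrow> q \<in> free_lie E \<Longrightarrow> inD E AA RR (lie_br p q)"
proof (induction rule: free_lie.induct)
  case (fl_gen x) show ?case by (rule genD[OF fl_gen.prems fl_gen.hyps])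
next
  case fl_zero show ?case unfolding br_zero_left by (rule inD_zero)
next
  case (fl_add p p') show ?case unfolding br_add_left
    by (rule inD_add[OF fl_add.IH(1)[OF fl_add.prems] fl_add.IH(2)[OF fl_add.prems]])
next
  case (fl_smult p c) show ?case unfolding br_sm_left
    by (rule inD_sm[OF fl_smult.IH[OF fl_smult.prems]])
next
  case (fl_br a b) show ?case unfolding jacobi[of a b]
    by (rule inD_diff[OF Dbr[OF fl_br.hyps(1) fl_br.IH(2)[OF fl_br.prems]] Dbr[OF fl_br.hyps(2) fl_br.IH(1)[OF fl_br.prems]]])
qed

lemma derivedD: "u \<in> derived_free E \<Longrightarrow> inD E AA RR u"
proof (induction rule: derived_free.induct)
  case (df_br p q) show ?case by (rule pairD[OF df_br.hyps])
next
  case df_zero show ?case by (rule inD_zero)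
next
  case (df_add p q) show ?case by (rule inD_add[OF df_add.IH])
next
  case (df_smult p c) show ?case by (rule inD_sm[OF df_smult.IH])
qed

end



theorem mainTheorem1:
  fixes E :: "'e set" and \<A> :: "'e set set" and RR :: "'e set \<Rightarrow> ('e list \<Rightarrow> 'k::field) set"
  assumes "finite E"
    and "set_arrangement E \<A>"
    and "\<forall>A\<in>\<A>. RR A \<subseteq> derived_free A"
  shows "(\<forall>u\<in>derived_free E.
            (\<forall>A\<in>\<A>. proj A u \<in> lie_ideal A (RR A)) \<longrightarrow> u \<in> lie_ideal E (rels E \<A> RR))
         \<longleftrightarrow>
         (\<forall>A\<in>\<A>. \<forall>x\<in>E - A. \<forall>v\<in>derived_free A.
            lie_br (gen x) v \<in> lie_ideal E (rels E \<A> RR))"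
proof -
  interpret S: arrsetup E \<A> RR using assms by unfold_locales
  show ?thesis
  proof
    assume L: "\<forall>u\<in>derived_free E.
            (\<forall>A\<in>\<A>. proj A u \<in> lie_ideal A (RR A)) \<longrightarrow> u \<in> lie_ideal E (rels E \<A> RR)"
    show "\<forall>A\<in>\<A>. \<forall>x\<in>E - A. \<forall>v\<in>derived_free A. lie_br (gen x) v \<in> lie_ideal E (rels E \<A> RR)"
    proof (intro ballI)
      fix A x and v :: "'e list \<Rightarrow> 'k" assume A: "A \<in> \<A>" and x: "x \<in> E - A" and v: "v \<in> derived_free A"
      have vE: "v \<in> free_lie E" by (rule free_lie_mono[OF derived_sub_free[OF v] S.AsubE[OF A]])
      have u: "lie_br (gen x) v \<in> derived_free E"
        by (rule df_br[OF free_lie.fl_gen vE]) (use x in blast)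
      have "proj B (lie_br (gen x :: 'e list \<Rightarrow> 'k) v) \<in> lie_ideal B (RR B)" if B: "B \<in> \<A>" for B
      proof (cases "x \<in> B")
        case True
        then have "A \<noteq> B" using x by blast
        then have z: "proj B v = 0" using proj_derived_zero[OF v] S.small[OF A B] by blast
        show ?thesis unfolding proj_br z br_zero_right by (rule lie_ideal.li_zero)
      next
        case False
        show ?thesis unfolding proj_br proj_gen if_not_P[OF False] br_zero_left by (rule lie_ideal.li_zero)
      qed
      then show "lie_br (gen x) v \<in> lie_ideal E (rels E \<A> RR)" using L u by blast
    qed
  next
    assume R: "\<forall>A\<in>\<A>. \<forall>x\<in>E - A. \<forall>v\<in>derived_free A. lie_br (gen x) v \<in> lie_ideal E (rels E \<A> RR)"
    interpret T: arrhyp E \<A> RR using assms R by unfold_locales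
    show "\<forall>u\<in>derived_free E.
            (\<forall>A\<in>\<A>. proj A u \<in> lie_ideal A (RR A)) \<longrightarrow> u \<in> lie_ideal E (rels E \<A> RR)"
    proof (intro ballI impI)
      fix u assume u: "u \<in> derived_free E" and P: "\<forall>A\<in>\<A>. proj A u \<in> lie_ideal A (RR A)"
      obtain v where v: "\<forall>A\<in>\<A>. v A \<in> derived_free A" "u - sum v \<A> \<in> lie_ideal E (rels E \<A> RR)"
        using T.derivedD[OF u] unfolding inD_def by blast
      have vB: "v B \<in> lie_ideal E (rels E \<A> RR)" if B: "B \<in> \<A>" for B
      proof -
        have "proj B (sum v \<A>) = (\<Sum>A\<in>\<A>. proj B (v A))" by (rule proj_sum)
        also have "\<dots> = proj B (v B) + (\<Sum>A\<in>\<A> - {B}. proj B (v A))"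
          by (rule sum.remove[OF S.finAA B])
        also have "(\<Sum>A\<in>\<A> - {B}. proj B (v A)) = 0"
        proof (rule sum.neutral, rule ballI)
          fix A assume "A \<in> \<A> - {B}"
          then have A: "A \<in> \<A>" "A \<noteq> B" by auto
          show "proj B (v A) = 0"
            using proj_derived_zero[of "v A" A B] v(1) A S.small[OF A(1) B A(2)] by blast
        qed
        also have "proj B (v B) = v B"
          using free_lie_supp[OF derived_sub_free] v(1) B by blast
        finally have e: "proj B (sum v \<A>) = v B" by simp
        have "proj B (u - sum v \<A>) \<in> lie_ideal B (RR B)" by (rule S.proj_J[OF v(2) B])
        then have "proj B u - v B \<in> lie_ideal B (RR B)" unfolding proj_diff e .
        then have "proj B u - (proj B u - v B) \<in> lie_ideal B (RR B)"
          by (rule li_diff[OF P[rule_format, OF B]])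
        moreover have "proj B u - (proj B u - v B) = v B" by simp
        ultimately have "v B \<in> lie_ideal B (RR B)" by simp
        then show ?thesis
        proof (rule li_mono)
          show "B \<subseteq> E" by (rule S.AsubE[OF B])
          show "RR B \<subseteq> rels E \<A> RR" unfolding rels_def using B by blast
        qed
      qed
      have "sum v \<A> \<in> lie_ideal E (rels E \<A> RR)" by (rule li_sum[OF S.finAA vB])
      then have "(u - sum v \<A>) + sum v \<A> \<in> lie_ideal E (rels E \<A> RR)" by (rule li_add[OF v(2)])
      then show "u \<in> lie_ideal E (rels E \<A> RR)" by simp
    qed
  qed
qed

end
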